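(* If $V=\langle v_1,\dots,v_\ell\rangle$ is a sequence of moves that can be applied (successively) to the distribution $\mu$, then $M_2[V\mu]\le M_2[\bar V\mu]$, where $\bar V$ is the sequence of extreme moves on the same intervals.
   Context: A distribution is a finite set $\{(x_1,m_1),\dots,(x_k,m_k)\}$, $m_i>0$; $\mu(A)=\sum_{x_i\in A}m_i$; $M_j[\mu]=\sum_im_ix_i^j$. A move $v=([a,b],\delta)$ has $\delta$ a signed distribution on $[a,b]$ with $M_0[\delta]=M_1[\delta]=0$; it applies to $\mu$ if $\mu+\delta$ is a distribution, and $v\mu=\mu+\delta$; $V\mu$ is the result of applying the moves in order. The extreme move $\bar v$ on $[a,b]$ maps $\mu$ to the distribution $\mu'$ with $\mu'\{a<x<b\}=0$, $\mu'(\{x\})=\mu(\{x\})$ for $x\notin[a,b]$, $M_0[\mu']=M_0[\mu]$, $M_1[\mu']=M_1[\mu]$. *)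

theory Defs
  imports Main "HOL.Real"
begin

text \<open>A (signed) distribution is represented by its mass function real \<Rightarrow> real,
  with finite support: the pair (x_i, m_i) corresponds to mu x_i = m_i.\<close>

type_synonym distr = "real \<Rightarrow> real"

definition supp :: "distr \<Rightarrow> real set" where
  "supp \<mu> = {x. \<mu> x \<noteq> 0}"

definition is_distribution :: "distr \<Rightarrow> bool" where
  "is_distribution \<mu> \<longleftrightarrow> finite (supp \<mu>) \<and> (\<forall>x. 0 \<le> \<mu> x)"

definition mass :: "distr \<Rightarrow> real set \<Rightarrow> real" where
  "mass \<mu> A = (\<Sum>x\<in>supp \<mu> \<inter> A. \<mu> x)"

definition moment :: "nat \<Rightarrow> distr \<Rightarrow> real" where
  "moment j \<mu> = (\<Sum>x\<in>supp \<mu>. \<mu> x * x ^ j)"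

text \<open>A move ([a,b], delta) is represented as the triple (a, b, delta).\<close>

type_synonym move = "real \<times> real \<times> distr"

definition is_move :: "move \<Rightarrow> bool" where
  "is_move v \<longleftrightarrow> (case v of (a, b, \<delta>) \<Rightarrow>
      a \<le> b \<and> finite (supp \<delta>) \<and> supp \<delta> \<subseteq> {a..b}
      \<and> moment 0 \<delta> = 0 \<and> moment 1 \<delta> = 0)"

definition apply_move :: "move \<Rightarrow> distr \<Rightarrow> distr" where
  "apply_move v \<mu> = (case v of (a, b, \<delta>) \<Rightarrow> (\<lambda>x. \<mu> x + \<delta> x))"

definition move_applies :: "move \<Rightarrow> distr \<Rightarrow> bool" where
  "move_applies v \<mu> \<longleftrightarrow> is_distribution (apply_move v \<mu>)"

fun moves_apply :: "move list \<Rightarrow> distr \<Rightarrow> bool" where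
  "moves_apply [] \<mu> = True"
| "moves_apply (v # vs) \<mu> = (move_applies v \<mu> \<and> moves_apply vs (apply_move v \<mu>))"

fun apply_moves :: "move list \<Rightarrow> distr \<Rightarrow> distr" where
  "apply_moves [] \<mu> = \<mu>"
| "apply_moves (v # vs) \<mu> = apply_moves vs (apply_move v \<mu>)"

definition extreme_result :: "real \<Rightarrow> real \<Rightarrow> distr \<Rightarrow> distr \<Rightarrow> bool" where
  "extreme_result a b \<mu> \<mu>' \<longleftrightarrow>
     is_distribution \<mu>' \<and> mass \<mu>' {a<..<b} = 0
     \<and> (\<forall>x. x \<notin> {a..b} \<longrightarrow> \<mu>' x = \<mu> x)
     \<and> moment 0 \<mu>' = moment 0 \<mu> \<and> moment 1 \<mu>' = moment 1 \<mu>"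

definition extreme_move :: "real \<Rightarrow> real \<Rightarrow> distr \<Rightarrow> distr" where
  "extreme_move a b \<mu> = (THE \<mu>'. extreme_result a b \<mu> \<mu>')"

fun apply_extreme_moves :: "move list \<Rightarrow> distr \<Rightarrow> distr" where
  "apply_extreme_moves [] \<mu> = \<mu>"
| "apply_extreme_moves ((a, b, \<delta>) # vs) \<mu> = apply_extreme_moves vs (extreme_move a b \<mu>)"

end

theory Submission
  imports Defs "HOL-Analysis.Convex"
begin

definition E :: "distr \<Rightarrow> (real \<Rightarrow> real) \<Rightarrow> real" where
  "E \<mu> f = (\<Sum>x\<in>supp \<mu>. \<mu> x * f x)"

lemma msum:
  assumes "finite A" "supp \<mu> \<subseteq> A"
  shows "(\<Sum>x\<in>supp \<mu>. \<mu> x * k x) = (\<Sum>x\<in>A. \<mu> x * k x)"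
  by (rule sum.mono_neutral_left) (use assms in \<open>auto simp: supp_def\<close>)

lemma moment_A:
  assumes "finite A" "supp \<mu> \<subseteq> A"
  shows "moment j \<mu> = (\<Sum>x\<in>A. \<mu> x * x ^ j)"
  unfolding moment_def by (rule msum[OF assms])

lemma E_A:
  assumes "finite A" "supp \<mu> \<subseteq> A"
  shows "E \<mu> f = (\<Sum>x\<in>A. \<mu> x * f x)"
  unfolding E_def by (rule msum[OF assms])

lemma two_point_sum:
  fixes h k :: "real \<Rightarrow> real"
  assumes "finite A" "a \<in> A" "b \<in> A" "\<And>x. x \<in> A \<Longrightarrow> x \<noteq> a \<Longrightarrow> x \<noteq> b \<Longrightarrow> h x = 0"
  shows "(\<Sum>x\<in>A. h x * k x) = (if a = b then h a * k a else h a * k a + h b * k b)"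
proof -
  have "(\<Sum>x\<in>A. h x * k x) = (\<Sum>x\<in>{a,b}. h x * k x)"
    proof (rule sum.mono_neutral_right)
    show "\<forall>i\<in>A - {a, b}. h i * k i = 0" using assms(4) by simp
  qed (use assms in auto)
  then show ?thesis by auto
qed

lemma zero_in_open:
  assumes "is_distribution \<mu>'" "mass \<mu>' {a<..<b} = 0" "x \<in> {a<..<b}"
  shows "\<mu>' x = 0"
proof (rule ccontr)
  assume ne: "\<mu>' x \<noteq> 0"
  have fin: "finite (supp \<mu>' \<inter> {a<..<b})" using assms(1) by (auto simp: is_distribution_def)
  have nn: "\<forall>y\<in>supp \<mu>' \<inter> {a<..<b}. 0 \<le> \<mu>' y" using assms(1) by (auto simp: is_distribution_def)
  have "\<forall>y\<in>supp \<mu>' \<inter> {a<..<b}. \<mu>' y = 0"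
    using sum_nonneg_eq_0_iff[OF fin] nn assms(2) unfolding mass_def by blast
  moreover have "x \<in> supp \<mu>' \<inter> {a<..<b}" using ne assms(3) by (auto simp: supp_def)
  ultimately show False using ne by blast
qed

lemma lin_zero:
  assumes "finite A" "supp h \<subseteq> A" "moment 0 h = 0" "moment 1 h = 0"
  shows "(\<Sum>x\<in>A. h x * (c + d * (x - a))) = 0"
proof -
  have m0: "(\<Sum>x\<in>A. h x) = 0" using moment_A[OF assms(1,2), of 0] assms(3) by simp
  have m1: "(\<Sum>x\<in>A. h x * x) = 0" using moment_A[OF assms(1,2), of 1] assms(4) by simp
  have "(\<Sum>x\<in>A. h x * (c + d * (x - a))) = c * (\<Sum>x\<in>A. h x) + d * (\<Sum>x\<in>A. h x * x) - d * a * (\<Sum>x\<in>A. h x)"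
    by (simp add: sum_distrib_left sum_subtractf sum.distrib algebra_simps)
  then show ?thesis using m0 m1 by simp
qed


lemma extreme_unique:
  assumes r1: "extreme_result a b \<nu> \<mu>1" and r2: "extreme_result a b \<nu> \<mu>2"
  shows "\<mu>1 = \<mu>2"
proof -
  define A where "A = supp \<mu>1 \<union> supp \<mu>2 \<union> {a,b}"
  have d1: "is_distribution \<mu>1" and d2: "is_distribution \<mu>2"
    using r1 r2 by (auto simp: extreme_result_def)
  have fA: "finite A" using d1 d2 by (auto simp: A_def is_distribution_def)
  have s1: "supp \<mu>1 \<subseteq> A" and s2: "supp \<mu>2 \<subseteq> A" by (auto simp: A_def)
  define h where "h x = \<mu>1 x - \<mu>2 x" for x
  have hz: "h x = 0" if "x \<noteq> a" "x \<noteq> b" for x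
  proof (cases "x \<in> {a<..<b}")
    case True
    then show ?thesis using zero_in_open[OF d1 _ True] zero_in_open[OF d2 _ True] r1 r2
      by (auto simp: h_def extreme_result_def)
  next
    case False
    then have "x \<notin> {a..b}" using that by auto
    then show ?thesis using r1 r2 by (auto simp: h_def extreme_result_def)
  qed
  have mom: "(\<Sum>x\<in>A. h x * x ^ j) = 0" if "j \<le> 1" for j
  proof -
    have "moment j \<mu>1 = moment j \<mu>2" using r1 r2 that
      by (cases j) (auto simp: extreme_result_def)
    then show ?thesis
      using moment_A[OF fA s1, of j] moment_A[OF fA s2, of j]
      by (simp add: h_def left_diff_distrib sum_subtractf)
  qed
  have aA: "a \<in> A" and bA: "b \<in> A" by (auto simp: A_def)
  have tp: "(\<Sum>x\<in>A. h x * x ^ j) = (if a = b then h a * a ^ j else h a * a ^ j + h b * b ^ j)" for j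
    by (rule two_point_sum[OF fA aA bA]) (use hz in auto)
  have "h a = 0 \<and> h b = 0"
  proof (cases "a = b")
    case True then show ?thesis using mom[of 0] tp[of 0] by simp
  next
    case False
    have e0: "h a + h b = 0" using mom[of 0] tp[of 0] False by simp
    have e1: "h a * a + h b * b = 0" using mom[of 1] tp[of 1] False by simp
    have "h b * (b - a) = (h a * a + h b * b) - a * (h a + h b)" by (simp add: algebra_simps)
    then have "h b * (b - a) = 0" using e0 e1 by simp
    then have "h b = 0" using False by simp
    then show ?thesis using e0 by simp
  qed
  then have "\<forall>x. h x = 0" using hz by metis
  then show ?thesis by (auto simp: h_def)
qed


lemma extreme_exists:
  assumes d: "is_distribution \<nu>" and ab: "a \<le> b"
  shows "\<exists>\<nu>'. extreme_result a b \<nu> \<nu>'"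
proof (cases "a = b")
  case True
  then show ?thesis using d unfolding extreme_result_def mass_def by (intro exI[of _ \<nu>]) auto
next
  case False
  then have lt: "a < b" using ab by simp
  define I where "I = supp \<nu> \<inter> {a<..<b}"
  define m where "m = (\<Sum>x\<in>I. \<nu> x)"
  define s where "s = (\<Sum>x\<in>I. \<nu> x * x)"
  define p where "p = (b * m - s) / (b - a)"
  define q where "q = (s - a * m) / (b - a)"
  define \<nu>' where "\<nu>' x = (if a < x \<and> x < b then 0 else if x = a then \<nu> a + p else if x = b then \<nu> b + q else \<nu> x)" for x
  have fs: "finite (supp \<nu>)" and nn: "\<And>x. 0 \<le> \<nu> x" using d by (auto simp: is_distribution_def)
  have fI: "finite I" using fs by (simp add: I_def)
  have "a * m \<le> s" unfolding m_def s_def sum_distrib_left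
  proof (rule sum_mono)
    fix x assume "x \<in> I"
    then show "a * \<nu> x \<le> \<nu> x * x" using mult_right_mono[of a x "\<nu> x"] nn[of x] by (auto simp: I_def algebra_simps)
  qed
  moreover have "s \<le> b * m" unfolding m_def s_def sum_distrib_left
  proof (rule sum_mono)
    fix x assume "x \<in> I"
    then show "\<nu> x * x \<le> b * \<nu> x" using mult_right_mono[of x b "\<nu> x"] nn[of x] by (auto simp: I_def algebra_simps)
  qed
  ultimately have p0: "0 \<le> p" and q0: "0 \<le> q" using lt by (auto simp: p_def q_def)
  have nn': "0 \<le> \<nu>' x" for x using nn p0 q0 by (auto simp: \<nu>'_def)
  define A where "A = supp \<nu> \<union> {a,b}"
  have fA: "finite A" using fs by (simp add: A_def)
  have sA: "supp \<nu> \<subseteq> A" by (auto simp: A_def)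
  have sA': "supp \<nu>' \<subseteq> A" by (auto simp: A_def supp_def \<nu>'_def)
  have fs': "finite (supp \<nu>')" using finite_subset[OF sA' fA] .
  have mass0: "mass \<nu>' {a<..<b} = 0" unfolding mass_def by (rule sum.neutral) (auto simp: \<nu>'_def)
  have out: "\<forall>x. x \<notin> {a..b} \<longrightarrow> \<nu>' x = \<nu> x" using lt by (auto simp: \<nu>'_def)
  have dec: "\<nu>' x * k x = \<nu> x * k x + ((if x = a then p * k x else 0) + (if x = b then q * k x else 0)
      - (if x \<in> {a<..<b} then \<nu> x * k x else 0))" for x and k :: "real \<Rightarrow> real"
    using lt by (auto simp: \<nu>'_def algebra_simps)
  have AI: "A \<inter> {a<..<b} = I" by (auto simp: A_def I_def)
  have key: "(\<Sum>x\<in>A. \<nu>' x * k x) = (\<Sum>x\<in>A. \<nu> x * k x) + (p * k a + q * k b - (\<Sum>x\<in>I. \<nu> x * k x))"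
    for k :: "real \<Rightarrow> real"
  proof -
    have "(\<Sum>x\<in>A. \<nu>' x * k x) = (\<Sum>x\<in>A. \<nu> x * k x) + ((\<Sum>x\<in>A. (if x = a then p * k x else 0)) + (\<Sum>x\<in>A. (if x = b then q * k x else 0))
      - (\<Sum>x\<in>A. (if x \<in> {a<..<b} then \<nu> x * k x else 0)))"
      by (simp only: dec sum.distrib sum_subtractf)
    also have "(\<Sum>x\<in>A. (if x \<in> {a<..<b} then \<nu> x * k x else 0)) = (\<Sum>x\<in>I. \<nu> x * k x)"
      using fA by (simp add: sum.If_cases AI[symmetric] greaterThanLessThan_def greaterThan_def lessThan_def Int_def)
    also have "(\<Sum>x\<in>A. (if x = a then p * k x else 0)) = p * k a" using fA by (simp add: A_def)
    also have "(\<Sum>x\<in>A. (if x = b then q * k x else 0)) = q * k b" using fA by (simp add: A_def)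
    finally show ?thesis .
  qed
  have pq0: "p + q = m"
  proof -
    have "p + q = (b * m - a * m) / (b - a)" by (simp add: p_def q_def add_divide_distrib[symmetric])
    also have "\<dots> = m" using lt by (simp add: left_diff_distrib[symmetric])
    finally show ?thesis .
  qed
  have pq1: "p * a + q * b = s"
  proof -
    have "p * a + q * b = ((b * m - s) * a + (s - a * m) * b) / (b - a)" by (simp add: p_def q_def add_divide_distrib)
    also have "(b * m - s) * a + (s - a * m) * b = s * (b - a)" by (simp add: algebra_simps)
    also have "s * (b - a) / (b - a) = s" using lt by simp
    finally show ?thesis .
  qed
  have M0: "moment 0 \<nu>' = moment 0 \<nu>"
    using key[of "\<lambda>x. x ^ 0"] moment_A[OF fA sA, of 0] moment_A[OF fA sA', of 0] lt
    using pq0 by (simp add: m_def)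
  have M1: "moment 1 \<nu>' = moment 1 \<nu>"
    using key[of "\<lambda>x. x ^ 1"] moment_A[OF fA sA, of 1] moment_A[OF fA sA', of 1] lt
    using pq1 by (simp add: s_def)
  show ?thesis unfolding extreme_result_def is_distribution_def
    using fs' nn' mass0 out M0 M1 by blast
qed

lemma extreme_props:
  assumes "is_distribution \<nu>" "a \<le> b"
  shows "extreme_result a b \<nu> (extreme_move a b \<nu>)"
proof -
  obtain \<nu>' where r: "extreme_result a b \<nu> \<nu>'" using extreme_exists[OF assms] by blast
  show ?thesis unfolding extreme_move_def
    by (rule theI[where P="extreme_result a b \<nu>", OF r]) (use extreme_unique r in blast)
qed


lemma convex_max_affine:
  assumes "convex_on UNIV f"
  shows "convex_on UNIV (\<lambda>x. max (f x) (c + d * (x - a)))"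
  unfolding convex_on_def
proof (intro conjI ballI allI impI)
  fix x y :: real and u v :: real
  assume u: "u \<ge> 0" and v: "v \<ge> 0" and uv: "u + v = 1"
  have "f (u *\<^sub>R x + v *\<^sub>R y) \<le> u * f x + v * f y"
    using assms u v uv unfolding convex_on_def by blast
  also have "\<dots> \<le> u * max (f x) (c + d * (x - a)) + v * max (f y) (c + d * (y - a))"
    using u v by (intro add_mono mult_left_mono) auto
  finally have 1: "f (u *\<^sub>R x + v *\<^sub>R y) \<le> u * max (f x) (c + d * (x - a)) + v * max (f y) (c + d * (y - a))" .
  have "c + d * ((u *\<^sub>R x + v *\<^sub>R y) - a) = u * (c + d * (x - a)) + v * (c + d * (y - a))"
  proof -
    have "u * (c + d * (x - a)) + v * (c + d * (y - a)) = (u + v) * c + d * (u * x + v * y - (u + v) * a)"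
      by (simp add: algebra_simps)
    then show ?thesis using uv by simp
  qed
  also have "\<dots> \<le> u * max (f x) (c + d * (x - a)) + v * max (f y) (c + d * (y - a))"
    using u v by (intro add_mono mult_left_mono) auto
  finally show "max (f (u *\<^sub>R x + v *\<^sub>R y)) (c + d * ((u *\<^sub>R x + v *\<^sub>R y) - a))
      \<le> u * max (f x) (c + d * (x - a)) + v * max (f y) (c + d * (y - a))"
    using 1 by simp
qed simp

lemma majorant:
  fixes f :: "real \<Rightarrow> real"
  assumes cf: "convex_on UNIV f" and ab: "a \<le> b"
  defines "ell \<equiv> \<lambda>x. f a + (f b - f a) / (b - a) * (x - a)"
  shows "\<exists>g. convex_on UNIV g \<and> (\<forall>x. f x \<le> g x) \<and> (\<forall>x\<in>{a..b}. g x = ell x) \<and> (\<forall>x. x \<notin> {a..b} \<longrightarrow> g x = f x)"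
proof (cases "a = b")
  case True
  then show ?thesis using cf by (intro exI[of _ f]) (auto simp: ell_def)
next
  case False
  then have lt: "a < b" using ab by simp
  have inside: "f x \<le> ell x" if "x \<in> {a..b}" for x
  proof -
    have "convex_on {a..b} f" using cf by (rule convex_on_subset) (auto intro: convex_real_interval)
    from convex_onD_Icc'[OF this that] show ?thesis by (simp add: ell_def algebra_simps)
  qed
  have right: "ell x \<le> f x" if "b < x" for x
  proof -
    have "convex_on {a..x} f" using cf by (rule convex_on_subset) (auto intro: convex_real_interval)
    moreover have "b \<in> {a..x}" using lt that by auto
    ultimately have h0: "f b \<le> (f x - f a) / (x - a) * (b - a) + f a" by (rule convex_onD_Icc')
    then have h: "f b - f a \<le> (f x - f a) / (x - a) * (b - a)" by linarith
    define r where "r = (f x - f a) / (x - a)"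
    have "(f b - f a) / (b - a) \<le> r" using h lt by (simp add: r_def divide_le_eq)
    then have "(f b - f a) / (b - a) * (x - a) \<le> r * (x - a)" using lt that by (intro mult_right_mono) auto
    also have "r * (x - a) = f x - f a" using lt that by (simp add: r_def)
    finally show ?thesis by (simp add: ell_def)
  qed
  have left: "ell x \<le> f x" if "x < a" for x
  proof -
    have "convex_on {x..b} f" using cf by (rule convex_on_subset) (auto intro: convex_real_interval)
    moreover have "a \<in> {x..b}" using lt that by auto
    ultimately have h0: "f a \<le> (f x - f b) / (b - x) * (b - a) + f b" by (rule convex_onD_Icc'')
    then have h: "f a - f b \<le> (f x - f b) / (b - x) * (b - a)" by linarith
    define r where "r = (f x - f b) / (b - x)"
    have h': "f a - f b \<le> r * (b - a)" using h by (simp add: r_def)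
    have "- r * (b - a) \<le> f b - f a" using h' by simp
    then have "- r \<le> (f b - f a) / (b - a)" using lt by (simp add: pos_le_divide_eq)
    then have "(f b - f a) / (b - a) * (x - a) \<le> - r * (x - a)" using lt that by (intro mult_right_mono_neg) auto
    also have "- r * (x - a) = r * (a - x)" by (simp add: algebra_simps)
    finally have 1: "ell x \<le> f a + r * (a - x)" by (simp add: ell_def)
    have "f a + r * (a - x) \<le> r * (b - a) + f b + r * (a - x)" using h by (simp add: r_def)
    also have "\<dots> = r * (b - x) + f b" by (simp add: algebra_simps)
    also have "r * (b - x) = f x - f b" using lt that by (simp add: r_def)
    finally show ?thesis using 1 by simp
  qed
  define g where "g x = max (f x) (f a + (f b - f a) / (b - a) * (x - a))" for x
  have "convex_on UNIV g" unfolding g_def by (rule convex_max_affine[OF cf])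
  moreover have "\<forall>x. f x \<le> g x" by (simp add: g_def)
  moreover have "\<forall>x\<in>{a..b}. g x = ell x" using inside by (auto simp: g_def ell_def max_def)
  moreover have "\<forall>x. x \<notin> {a..b} \<longrightarrow> g x = f x"
  proof (intro allI impI)
    fix x assume "x \<notin> {a..b}"
    then have "x < a \<or> b < x" by auto
    then have "ell x \<le> f x" using left right by blast
    then show "g x = f x" by (simp add: g_def ell_def max_def)
  qed
  ultimately show ?thesis by blast
qed


lemma step:
  fixes f :: "real \<Rightarrow> real"
  assumes d\<mu>: "is_distribution \<mu>" and d\<nu>: "is_distribution \<nu>"
    and mv: "is_move (a, b, \<delta>)" and app: "is_distribution (\<lambda>x. \<mu> x + \<delta> x)"
    and dom: "\<forall>g. convex_on UNIV g \<longrightarrow> E \<mu> g \<le> E \<nu> g"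
    and cf: "convex_on UNIV f"
  shows "E (\<lambda>x. \<mu> x + \<delta> x) f \<le> E (extreme_move a b \<nu>) f"
proof -
  have ab: "a \<le> b" and fd: "finite (supp \<delta>)" and sd: "supp \<delta> \<subseteq> {a..b}"
    and d0: "moment 0 \<delta> = 0" and d1: "moment 1 \<delta> = 0"
    using mv by (auto simp: is_move_def)
  define \<nu>' where "\<nu>' = extreme_move a b \<nu>"
  have r: "extreme_result a b \<nu> \<nu>'" unfolding \<nu>'_def by (rule extreme_props[OF d\<nu> ab])
  have d\<nu>': "is_distribution \<nu>'" using r by (simp add: extreme_result_def)
  define ell where "ell = (\<lambda>x. f a + (f b - f a) / (b - a) * (x - a))"
  obtain g where cg: "convex_on UNIV g" and fg: "\<forall>x. f x \<le> g x"
    and gin: "\<forall>x\<in>{a..b}. g x = ell x" and gout: "\<forall>x. x \<notin> {a..b} \<longrightarrow> g x = f x"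
    using majorant[OF cf ab] unfolding ell_def by blast
  have ella: "ell a = f a" by (simp add: ell_def)
  have ellb: "ell b = f b"
  proof (cases "a = b")
    case True then show ?thesis by (simp add: ell_def)
  next
    case False then show ?thesis by (simp add: ell_def)
  qed
  define A where "A = supp \<mu> \<union> supp \<delta> \<union> supp \<nu> \<union> supp \<nu>' \<union> {a, b}"
  have fA: "finite A" using d\<mu> d\<nu> d\<nu>' fd by (simp add: A_def is_distribution_def)
  define \<mu>\<delta> where "\<mu>\<delta> = (\<lambda>x. \<mu> x + \<delta> x)"
  have s\<mu>\<delta>: "supp \<mu>\<delta> \<subseteq> A" by (auto simp: A_def supp_def \<mu>\<delta>_def)
  have s\<mu>: "supp \<mu> \<subseteq> A" and s\<delta>: "supp \<delta> \<subseteq> A" and s\<nu>: "supp \<nu> \<subseteq> A" and s\<nu>': "supp \<nu>' \<subseteq> A"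
    by (auto simp: A_def)
  have nn: "0 \<le> \<mu>\<delta> x" for x using app by (simp add: \<mu>\<delta>_def is_distribution_def)
  have "E \<mu>\<delta> f = (\<Sum>x\<in>A. \<mu>\<delta> x * f x)" by (rule E_A[OF fA s\<mu>\<delta>])
  also have "\<dots> \<le> (\<Sum>x\<in>A. \<mu>\<delta> x * g x)"
    by (rule sum_mono) (use fg nn in \<open>auto intro: mult_left_mono\<close>)
  also have "\<dots> = (\<Sum>x\<in>A. \<mu> x * g x) + (\<Sum>x\<in>A. \<delta> x * g x)"
    by (simp add: \<mu>\<delta>_def distrib_right sum.distrib)
  also have "(\<Sum>x\<in>A. \<delta> x * g x) = (\<Sum>x\<in>A. \<delta> x * (f a + (f b - f a) / (b - a) * (x - a)))"
  proof (rule sum.cong)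
    fix x assume "x \<in> A"
    show "\<delta> x * g x = \<delta> x * (f a + (f b - f a) / (b - a) * (x - a))"
    proof (cases "x \<in> {a..b}")
      case True then show ?thesis using gin by (simp add: ell_def)
    next
      case False then have "\<delta> x = 0" using sd by (auto simp: supp_def)
      then show ?thesis by simp
    qed
  qed simp
  also have "\<dots> = 0" by (rule lin_zero[OF fA s\<delta> d0 d1])
  also have "(\<Sum>x\<in>A. \<mu> x * g x) = E \<mu> g" by (rule E_A[OF fA s\<mu>, symmetric])
  also have "E \<mu> g \<le> E \<nu> g" using dom cg by blast
  also have "E \<nu> g = (\<Sum>x\<in>A. \<nu> x * g x)" by (rule E_A[OF fA s\<nu>])
  also have "\<dots> = (\<Sum>x\<in>A. \<nu>' x * g x)"
  proof -
    define h where "h x = \<nu> x - \<nu>' x" for x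
    have sh: "supp h \<subseteq> A" using s\<nu> s\<nu>' unfolding supp_def h_def by force
    have fh: "finite (supp h)" using finite_subset[OF sh fA] .
    have hm: "moment j h = 0" if "j \<le> 1" for j
    proof -
      have "moment j \<nu> = moment j \<nu>'" using r that by (cases j) (auto simp: extreme_result_def)
      then show ?thesis
        using moment_A[OF fA sh, of j] moment_A[OF fA s\<nu>, of j] moment_A[OF fA s\<nu>', of j]
        by (simp add: h_def left_diff_distrib sum_subtractf)
    qed
    have "(\<Sum>x\<in>A. h x * g x) = (\<Sum>x\<in>A. h x * (f a + (f b - f a) / (b - a) * (x - a)))"
    proof (rule sum.cong)
      fix x assume "x \<in> A"
      show "h x * g x = h x * (f a + (f b - f a) / (b - a) * (x - a))"
      proof (cases "x \<in> {a..b}")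
        case True then show ?thesis using gin by (simp add: ell_def)
      next
        case False then have "h x = 0" using r by (simp add: h_def extreme_result_def)
        then show ?thesis by simp
      qed
    qed simp
    also have "\<dots> = 0" by (rule lin_zero[OF fA sh hm hm]) simp_all
    finally have "(\<Sum>x\<in>A. h x * g x) = 0" .
    then show ?thesis by (simp add: h_def left_diff_distrib sum_subtractf)
  qed
  also have "\<dots> = (\<Sum>x\<in>A. \<nu>' x * f x)"
  proof (rule sum.cong)
    fix x assume "x \<in> A"
    show "\<nu>' x * g x = \<nu>' x * f x"
    proof (cases "x \<in> {a<..<b}")
      case True
      then have "\<nu>' x = 0" using zero_in_open[OF d\<nu>' _ True] r by (simp add: extreme_result_def)
      then show ?thesis by simp
    next
      case False
      then have "x \<notin> {a..b} \<or> x = a \<or> x = b" by auto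
      then show ?thesis using gout gin ella ellb ab by auto
    qed
  qed simp
  also have "\<dots> = E \<nu>' f" by (rule E_A[OF fA s\<nu>', symmetric])
  finally show ?thesis by (simp add: \<mu>\<delta>_def \<nu>'_def)
qed


lemma induct_main:
  "is_distribution \<mu> \<Longrightarrow> is_distribution \<nu> \<Longrightarrow> \<forall>v\<in>set V. is_move v \<Longrightarrow> moves_apply V \<mu>
   \<Longrightarrow> (\<forall>g. convex_on UNIV g \<longrightarrow> E \<mu> g \<le> E \<nu> g)
   \<Longrightarrow> (\<forall>g. convex_on UNIV g \<longrightarrow> E (apply_moves V \<mu>) g \<le> E (apply_extreme_moves V \<nu>) g)"
proof (induction V arbitrary: \<mu> \<nu>)
  case Nil
  then show ?case by simp
next
  case (Cons v V)
  obtain a b \<delta> where v: "v = (a, b, \<delta>)" by (cases v) auto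
  have mv: "is_move (a, b, \<delta>)" using Cons.prems(3) v by simp
  have ab: "a \<le> b" using mv by (simp add: is_move_def)
  have app: "is_distribution (\<lambda>x. \<mu> x + \<delta> x)"
    using Cons.prems(4) v by (simp add: move_applies_def apply_move_def)
  have rest: "moves_apply V (\<lambda>x. \<mu> x + \<delta> x)"
    using Cons.prems(4) v by (simp add: apply_move_def)
  have dn: "is_distribution (extreme_move a b \<nu>)"
    using extreme_props[OF Cons.prems(2) ab] by (simp add: extreme_result_def)
  have dom: "\<forall>g. convex_on UNIV g \<longrightarrow> E (\<lambda>x. \<mu> x + \<delta> x) g \<le> E (extreme_move a b \<nu>) g"
    using step[OF Cons.prems(1,2) mv app Cons.prems(5)] by blast
  have "\<forall>g. convex_on UNIV g \<longrightarrow> E (apply_moves V (\<lambda>x. \<mu> x + \<delta> x)) g \<le> E (apply_extreme_moves V (extreme_move a b \<nu>)) g"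
    by (rule Cons.IH[OF app dn _ rest dom]) (use Cons.prems(3) in simp)
  then show ?case by (simp add: v apply_move_def)
qed

theorem mainTheorem12:
  fixes \<mu> :: distr and V :: "move list"
  assumes "is_distribution \<mu>"
    and "\<forall>v\<in>set V. is_move v"
    and "moves_apply V \<mu>"
  shows "moment 2 (apply_moves V \<mu>) \<le> moment 2 (apply_extreme_moves V \<mu>)"
proof -
  have "\<forall>g. convex_on UNIV g \<longrightarrow> E (apply_moves V \<mu>) g \<le> E (apply_extreme_moves V \<mu>) g"
    by (rule induct_main[OF assms(1,1,2,3)]) simp
  then have "E (apply_moves V \<mu>) power2 \<le> E (apply_extreme_moves V \<mu>) power2"
    using convex_power2 by blast
  then show ?thesis by (simp add: E_def moment_def)
qed

end
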